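(* Let $\ell\in\{\tfrac12,\tfrac32,\tfrac52,\dots\}$ and let $\tau^\ell$ be the $(2\ell+1)\times(2\ell+1)$ matrix defined in the context. Then: (a) $\tau^\ell$ is invertible; (b) $|\tau^\ell_{-\ell,-\ell}|<1$ and $|\tau^\ell_{\ell,\ell}|<1$; (c) Let $v\in\mathbb{C}^{2\ell+1}$ (coordinates indexed by $-\ell,-\ell+1,\dots,\ell$) be supported either on $\{-\ell,\dots,-\tfrac12\}$ or on $\{\tfrac12,\dots,\ell\}$, and suppose $\tau^\ell v$ is supported either on $\{n: n+\ell\text{ even}\}$ or on $\{n: n+\ell\text{ odd}\}$. Then $v=0$ (and hence $\tau^\ell v=0$).
   Context: For $\ell\in\{\tfrac12,1,\tfrac32,2,\dots\}$ and $m,n\in\{-\ell,-\ell+1,\dots,\ell\}$, define $$\tau^\ell_{m,n}=\sqrt{\frac{(\ell-m)!(\ell+m)!}{(\ell-n)!(\ell+n)!}}\;\frac{i^{2\ell}}{2^\ell}\int_{|z|=1}(z+1)^{\ell-n}(z-1)^{\ell+n}z^{m-\ell}\,\frac{dz}{2\pi i z},$$ i.e. the prefactor times the coefficient of $z^{\ell-m}$ in the polynomial $(z+1)^{\ell-n}(z-1)^{\ell+n}$. The matrix $\tau^\ell=(\tau^\ell_{m,n})$, rows indexed by $m$ and columns by $n$ in increasing order from $-\ell$ to $\ell$, is the matrix of the spin-$\ell$ irreducible representation of $SU(2)$ evaluated at $\frac{1}{\sqrt2}\begin{pmatrix} i & i\\ i & -i\end{pmatrix}$, and is unitary. *)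

theory Defs
  imports Complex_Main "HOL-Computational_Algebra.Polynomial" "Jordan_Normal_Form.Matrix"
begin

text \<open>The spin-l matrix tau^l, parametrised by d = 2l (a natural number).
  Row/column index m (resp. n) in {-l..l} is encoded as i = m + l (resp. j = n + l)
  in {0..d}. Then l-m = d-i, l+m = i, l-n = d-j, l+n = j, and the entry is
  the prefactor times the coefficient of z^(d-i) in (z+1)^(d-j) (z-1)^j.\<close>

definition tau_entry :: "nat \<Rightarrow> nat \<Rightarrow> nat \<Rightarrow> complex" where
  "tau_entry d i j =
     complex_of_real (sqrt (real (fact (d - i) * fact i) / real (fact (d - j) * fact j)))
     * (\<i> ^ d / complex_of_real (2 powr (real d / 2)))
     * coeff ([:1, 1:] ^ (d - j) * [:-1, 1:] ^ j) (d - i)"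

definition tau :: "nat \<Rightarrow> complex mat" where
  "tau d = mat (d + 1) (d + 1) (\<lambda>(i, j). tau_entry d i j)"

end

theory Submission imports Defs "HOL-Computational_Algebra.Field_as_Ring" "HOL-Computational_Algebra.Polynomial_Factorial" begin

definition ee :: "nat \<Rightarrow> nat \<Rightarrow> complex poly" where
  "ee d j = [:1, 1:] ^ (d - j) * [:-1, 1:] ^ j"

lemma degree_ee: "degree (ee d j) \<le> d" if "j \<le> d"
proof -
  have "degree (ee d j) \<le> degree ([:1, 1:] ^ (d - j) :: complex poly) + degree ([:-1, 1:] ^ j :: complex poly)"
    unfolding ee_def by (rule degree_mult_le)
  also have "\<dots> \<le> (d - j) + j" 
    by (intro add_mono; rule order.trans[OF degree_power_le]; simp)
  finally show ?thesis using that by simp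
qed

lemma poly_sum_upto:
  fixes p :: "complex poly"
  assumes "degree p \<le> d"
  shows "poly p x = (\<Sum>i\<le>d. coeff p i * x ^ i)"
proof -
  have "(\<Sum>i\<le>d. coeff p i * x ^ i) = (\<Sum>i\<le>degree p. coeff p i * x ^ i)"
  proof (rule sum.mono_neutral_right)
    show "{..degree p} \<subseteq> {..d}" using assms by auto
    show "\<forall>i\<in>{..d} - {..degree p}. coeff p i * x ^ i = 0"
    proof
      fix i assume "i \<in> {..d} - {..degree p}"
      hence "degree p < i" by auto
      hence "coeff p i = 0" by (rule coeff_eq_0)
      thus "coeff p i * x ^ i = 0" by simp
    qed
  qed simp
  then show ?thesis by (simp add: poly_altdef)
qed

lemma poly_eq_off1:
  fixes p q :: "complex poly"
  assumes "\<And>z. z \<noteq> 1 \<Longrightarrow> poly p z = poly q z"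
  shows "p = q"
proof (rule ccontr)
  assume "p \<noteq> q"
  hence "p - q \<noteq> 0" by simp
  hence "finite {x. poly (p - q) x = 0}" by (rule poly_roots_finite)
  moreover have "UNIV - {1} \<subseteq> {x. poly (p - q) x = 0}" using assms by auto
  ultimately have "finite (UNIV - {1::complex})" by (rule finite_subset[rotated])
  thus False by (simp add: infinite_UNIV_char_0)
qed

lemma square_id:
  assumes l: "l \<le> d"
  shows "(\<Sum>j\<le>d. Polynomial.smult (coeff (ee d l) (d - j)) (ee d j)) = monom (2 ^ d) (d - l)"
proof (rule poly_eq_off1)
  fix z :: complex assume z: "z \<noteq> 1"
  define w where "w = (z + 1) / (z - 1)"
  have z1: "z - 1 \<noteq> 0" using z by simp
  have "poly (\<Sum>j\<le>d. Polynomial.smult (coeff (ee d l) (d - j)) (ee d j)) z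
      = (\<Sum>j\<le>d. coeff (ee d l) (d - j) * ((z + 1) ^ (d - j) * (z - 1) ^ j))"
    by (simp add: poly_sum ee_def add.commute)
  also have "\<dots> = (\<Sum>m\<le>d. coeff (ee d l) m * ((z + 1) ^ m * (z - 1) ^ (d - m)))"
    unfolding atMost_atLeast0
    by (subst sum.atLeastAtMost_rev) (auto intro!: sum.cong)
  also have "\<dots> = (\<Sum>m\<le>d. (z - 1) ^ d * (coeff (ee d l) m * w ^ m))"
  proof (rule sum.cong[OF refl])
    fix m assume "m \<in> {..d}"
    hence "(z - 1) ^ d = (z - 1) ^ m * (z - 1) ^ (d - m)" by (simp flip: power_add)
    moreover have "(z - 1) ^ m * w ^ m = (z + 1) ^ m" 
      using z1 by (simp add: w_def flip: power_mult_distrib)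
    ultimately show "coeff (ee d l) m * ((z + 1) ^ m * (z - 1) ^ (d - m)) = (z - 1) ^ d * (coeff (ee d l) m * w ^ m)"
      by (simp add: algebra_simps)
  qed
  also have "\<dots> = (z - 1) ^ d * poly (ee d l) w"
    by (simp add: poly_sum_upto[OF degree_ee[OF l]] sum_distrib_left)
  also have "\<dots> = ((z - 1) * (w + 1)) ^ (d - l) * ((z - 1) * (w - 1)) ^ l"
  proof -
    have "(z - 1) ^ d = (z - 1) ^ (d - l) * (z - 1) ^ l" using l by (simp flip: power_add)
    moreover have "poly (ee d l) w = (w + 1) ^ (d - l) * (w - 1) ^ l" by (simp add: ee_def add.commute)
    ultimately show ?thesis by (simp add: power_mult_distrib)
  qed
  also have "(z - 1) * (w + 1) = 2 * z" using z1 by (simp add: w_def field_simps)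
  also have "(z - 1) * (w - 1) = 2" using z1 by (simp add: w_def field_simps)
  also have "(2 * z) ^ (d - l) * 2 ^ l = 2 ^ d * z ^ (d - l)"
    using l by (simp add: power_mult_distrib flip: power_add)
  finally show "poly (\<Sum>j\<le>d. Polynomial.smult (coeff (ee d l) (d - j)) (ee d j)) z = poly (monom (2 ^ d) (d - l)) z"
    by (simp add: poly_monom)
qed


definition ss :: "nat \<Rightarrow> nat \<Rightarrow> complex" where
  "ss d i = complex_of_real (sqrt (real (fact (d - i) * fact i)))"
definition ph :: "nat \<Rightarrow> complex" where
  "ph d = \<i> ^ d / complex_of_real (2 powr (real d / 2))"
definition PP :: "nat \<Rightarrow> nat \<Rightarrow> nat \<Rightarrow> complex" where
  "PP d i j = coeff (ee d j) (d - i)"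

lemma ss_nz: "ss d i \<noteq> 0"
  by (simp add: ss_def)

lemma ph_nz: "ph d \<noteq> 0"
  by (simp add: ph_def)

lemma tau_entry_eq: "tau_entry d i j = ph d * ss d i / ss d j * PP d i j"
proof -
  have "sqrt (real (fact (d - i) * fact i) / real (fact (d - j) * fact j))
      = sqrt (real (fact (d - i) * fact i)) / sqrt (real (fact (d - j) * fact j))"
    by (rule real_sqrt_divide)
  hence h: "complex_of_real (sqrt (real (fact (d - i) * fact i) / real (fact (d - j) * fact j)))
      = ss d i / ss d j" by (simp add: ss_def)
  show ?thesis
    unfolding tau_entry_def h
    by (simp add: PP_def ee_def ph_def mult_ac)
qed

lemma PP_sq:
  assumes "i \<le> d" "l \<le> d"
  shows "(\<Sum>j\<le>d. PP d i j * PP d j l) = (if i = l then 2 ^ d else 0)"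
proof -
  have "coeff (\<Sum>j\<le>d. Polynomial.smult (coeff (ee d l) (d - j)) (ee d j)) (d - i)
      = coeff (monom (2 ^ d) (d - l)) (d - i)"
    by (simp only: square_id[OF assms(2)])
  moreover have "(d - l = d - i) = (i = l)" using assms by auto
  ultimately show ?thesis
    by (simp add: coeff_sum PP_def coeff_monom mult.commute)
qed

definition Binv :: "nat \<Rightarrow> complex mat" where
  "Binv d = mat (d + 1) (d + 1) (\<lambda>(i, j). ss d i / ss d j * PP d i j / (ph d * 2 ^ d))"

lemma sum_upto_conv: "(\<Sum>j\<in>{0..<Suc d}. f j) = (\<Sum>j\<le>d. f j)"
  by (rule sum.cong) auto

lemma tau_Binv: "tau d * Binv d = 1\<^sub>m (d + 1)"
proof (rule eq_matI)
  fix i l assume i: "i < dim_row (1\<^sub>m (d + 1) :: complex mat)" and l: "l < dim_col (1\<^sub>m (d + 1) :: complex mat)"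
  hence i': "i \<le> d" and l': "l \<le> d" by auto
  have "(tau d * Binv d) $$ (i, l) = (\<Sum>j\<le>d. tau_entry d i j * (ss d j / ss d l * PP d j l / (ph d * 2 ^ d)))"
    using i l by (simp add: tau_def Binv_def scalar_prod_def sum_upto_conv del: sum.op_ivl_Suc)
  also have "\<dots> = (\<Sum>j\<le>d. (ss d i / (ss d l * 2 ^ d)) * (PP d i j * PP d j l))"
    by (rule sum.cong[OF refl]) (simp add: tau_entry_eq field_simps ss_nz ph_nz)
  also have "\<dots> = (ss d i / (ss d l * 2 ^ d)) * (if i = l then 2 ^ d else 0)"
    by (simp only: sum_distrib_left[symmetric] PP_sq[OF i' l'])
  also have "\<dots> = 1\<^sub>m (d + 1) $$ (i, l)"
    using i l by (simp add: ss_nz)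
  finally show "(tau d * Binv d) $$ (i, l) = 1\<^sub>m (d + 1) $$ (i, l)" .
qed (auto simp: tau_def Binv_def)

lemma Binv_tau: "Binv d * tau d = 1\<^sub>m (d + 1)"
proof (rule eq_matI)
  fix i l assume i: "i < dim_row (1\<^sub>m (d + 1) :: complex mat)" and l: "l < dim_col (1\<^sub>m (d + 1) :: complex mat)"
  hence i': "i \<le> d" and l': "l \<le> d" by auto
  have "(Binv d * tau d) $$ (i, l) = (\<Sum>j\<le>d. (ss d i / ss d j * PP d i j / (ph d * 2 ^ d)) * tau_entry d j l)"
    using i l by (simp add: tau_def Binv_def scalar_prod_def sum_upto_conv del: sum.op_ivl_Suc)
  also have "\<dots> = (\<Sum>j\<le>d. (ss d i / (ss d l * 2 ^ d)) * (PP d i j * PP d j l))"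
    by (rule sum.cong[OF refl]) (simp add: tau_entry_eq field_simps ss_nz ph_nz)
  also have "\<dots> = (ss d i / (ss d l * 2 ^ d)) * (if i = l then 2 ^ d else 0)"
    by (simp only: sum_distrib_left[symmetric] PP_sq[OF i' l'])
  also have "\<dots> = 1\<^sub>m (d + 1) $$ (i, l)"
    using i l by (simp add: ss_nz)
  finally show "(Binv d * tau d) $$ (i, l) = 1\<^sub>m (d + 1) $$ (i, l)" .
qed (auto simp: tau_def Binv_def)

lemma dims: "dim_row (tau d) = d + 1" "dim_col (tau d) = d + 1"
  "dim_row (Binv d) = d + 1" "dim_col (Binv d) = d + 1"
  by (simp_all add: tau_def Binv_def)

lemma tau_invertible: "invertible_mat (tau d)"
  unfolding invertible_mat_def inverts_mat_def
  using tau_Binv[of d] Binv_tau[of d] by (auto simp: dims square_mat.simps)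


lemma pcompose_pow: "pcompose (p ^ n) r = (pcompose p r) ^ n"
  by (induction n) (simp_all add: pcompose_mult pcompose_1)

lemma pcompose_dvd: assumes "a dvd b" shows "pcompose a r dvd pcompose b r"
proof -
  from assms obtain c where "b = a * c" by (rule dvdE)
  hence "pcompose b r = pcompose a r * pcompose c r" by (simp add: pcompose_mult)
  thus ?thesis by (rule dvdI)
qed

lemma neg_pow_dvd: "(- a) ^ n dvd q \<Longrightarrow> (a :: complex poly) ^ n dvd q"
proof -
  assume "(- a) ^ n dvd q"
  then obtain c where "q = (- a) ^ n * c" by (rule dvdE)
  moreover have pm: "(- a) ^ n = (- 1) ^ n * a ^ n" by (rule power_minus)
  ultimately have "q = ((- 1) ^ n * a ^ n) * c" by (simp only: pm)
  hence "q = a ^ n * ((- 1) ^ n * c)" by (simp only: mult_ac)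
  thus ?thesis by (rule dvdI)
qed

lemma sym_poly:
  fixes q :: "complex poly"
  assumes "\<forall>m. even m \<longrightarrow> coeff q m = 0"
  shows "pcompose q [:0, -1:] = - q"
proof -
  have "poly (pcompose q [:0, -1:]) z = poly (- q) z" for z
  proof -
    have "poly (pcompose q [:0, -1:]) z = (\<Sum>i\<le>degree q. coeff q i * (- z) ^ i)"
      by (simp only: poly_pcompose) (simp add: poly_altdef)
    also have "\<dots> = (\<Sum>i\<le>degree q. - (coeff q i * z ^ i))"
    proof (rule sum.cong[OF refl])
      fix i show "coeff q i * (- z) ^ i = - (coeff q i * z ^ i)"
        using assms by (cases "even i") (auto simp: power_minus_odd power_minus_even)
    qed
    also have "\<dots> = poly (- q) z" by (simp add: poly_altdef sum_negf)
    finally show ?thesis .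
  qed
  thus ?thesis by (metis poly_eq_poly_eq_iff ext)
qed

lemma sym_poly2:
  fixes q :: "complex poly"
  assumes "\<forall>m. odd m \<longrightarrow> coeff q m = 0"
  shows "pcompose q [:0, -1:] = q"
proof -
  have "poly (pcompose q [:0, -1:]) z = poly q z" for z
  proof -
    have "poly (pcompose q [:0, -1:]) z = (\<Sum>i\<le>degree q. coeff q i * (- z) ^ i)"
      by (simp only: poly_pcompose) (simp add: poly_altdef)
    also have "\<dots> = (\<Sum>i\<le>degree q. coeff q i * z ^ i)"
    proof (rule sum.cong[OF refl])
      fix i show "coeff q i * (- z) ^ i = coeff q i * z ^ i"
        using assms by (cases "even i") (auto simp: power_minus_odd power_minus_even)
    qed
    also have "\<dots> = poly q z" by (simp add: poly_altdef)
    finally show ?thesis .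
  qed
  thus ?thesis by (metis poly_eq_poly_eq_iff ext)
qed

lemma coprime_lin: "coprime [:1, 1:] ([:-1, 1:] :: complex poly)"
proof (rule coprimeI)
  fix c :: "complex poly" assume "c dvd [:1, 1:]" "c dvd [:-1, 1:]"
  hence "c dvd [:1, 1:] - [:-1, 1:]" by (rule dvd_diff)
  moreover have "[:1, 1:] - [:-1, 1:] = ([:2:] :: complex poly)" by simp
  moreover have "is_unit ([:2:] :: complex poly)" by (simp add: is_unit_const_poly_iff dvd_field_iff)
  ultimately show "is_unit c" using dvd_unit_imp_unit by metis
qed

lemma key_poly:
  fixes q :: "complex poly"
  assumes deg: "degree q \<le> 2 * k + 1"
    and par: "(\<forall>m. even m \<longrightarrow> coeff q m = 0) \<or> (\<forall>m. odd m \<longrightarrow> coeff q m = 0)"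
    and dv: "[:1, 1:] ^ (k + 1) dvd q \<or> [:-1, 1:] ^ (k + 1) dvd q"
  shows "q = 0"
proof (rule ccontr)
  assume q0: "q \<noteq> 0"
  define r where "r = pcompose q [:0, -1:]"
  have rq: "r dvd q" using par sym_poly sym_poly2 unfolding r_def by (metis dvd_minus_iff dvd_refl)
  have c1: "pcompose [:1, 1:] [:0, -1:] = - ([:-1, 1:] :: complex poly)" by (simp add: pcompose_pCons)
  have c2: "pcompose [:-1, 1:] [:0, -1:] = - ([:1, 1:] :: complex poly)" by (simp add: pcompose_pCons)
  have both: "[:1, 1:] ^ (k + 1) dvd q \<and> [:-1, 1:] ^ (k + 1) dvd q"
  proof (cases "[:1, 1:] ^ (k + 1) dvd q")
    case True
    hence "pcompose ([:1, 1:] ^ (k + 1)) [:0, -1:] dvd r" unfolding r_def by (rule pcompose_dvd)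
    hence "(- [:-1, 1:]) ^ (k + 1) dvd q" using rq by (simp add: pcompose_pow c1 del: power_Suc) (metis dvd_trans)
    thus ?thesis using True neg_pow_dvd by blast
  next
    case False
    hence T: "[:-1, 1:] ^ (k + 1) dvd q" using dv by blast
    hence "pcompose ([:-1, 1:] ^ (k + 1)) [:0, -1:] dvd r" unfolding r_def by (rule pcompose_dvd)
    hence "(- [:1, 1:]) ^ (k + 1) dvd q" using rq by (simp add: pcompose_pow c2 del: power_Suc) (metis dvd_trans)
    thus ?thesis using T neg_pow_dvd by blast
  qed
  have "coprime ([:1, 1:] ^ (k + 1)) ([:-1, 1:] ^ (k + 1) :: complex poly)"
    using coprime_lin by (simp only: coprime_power_left_iff coprime_power_right_iff) blast
  hence "[:1, 1:] ^ (k + 1) * [:-1, 1:] ^ (k + 1) dvd q" using both divides_mult by blast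
  hence "degree ([:1, 1:] ^ (k + 1) * [:-1, 1:] ^ (k + 1) :: complex poly) \<le> degree q"
    using q0 by (rule dvd_imp_degree_le)
  moreover have "degree ([:1, 1:] ^ (k + 1) * [:-1, 1:] ^ (k + 1) :: complex poly) = 2 * k + 2"
    by (subst degree_mult_eq) (auto simp del: power_Suc simp: degree_linear_power)
  ultimately show False using deg by simp
qed


definition qq :: "nat \<Rightarrow> complex vec \<Rightarrow> complex poly" where
  "qq d v = (\<Sum>j\<le>d. Polynomial.smult (v $ j / ss d j) (ee d j))"

lemma Tv_entry:
  assumes v: "v \<in> carrier_vec (d + 1)" and i: "i \<le> d"
  shows "(tau d *\<^sub>v v) $ i = ph d * ss d i * coeff (qq d v) (d - i)"
proof -
  have "(tau d *\<^sub>v v) $ i = (\<Sum>j\<le>d. tau_entry d i j * v $ j)"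
    using v i by (simp add: tau_def scalar_prod_def sum_upto_conv del: sum.op_ivl_Suc)
  also have "\<dots> = (\<Sum>j\<le>d. ph d * ss d i * ((v $ j / ss d j) * PP d i j))"
    by (rule sum.cong[OF refl]) (simp add: tau_entry_eq ss_nz field_simps)
  also have "\<dots> = ph d * ss d i * coeff (qq d v) (d - i)"
    by (simp add: qq_def coeff_sum PP_def sum_distrib_left)
  finally show ?thesis .
qed

lemma degree_qq: "degree (qq d v) \<le> d"
  unfolding qq_def
  by (rule degree_sum_le) (auto intro: order.trans[OF degree_smult_le] degree_ee)

lemma dvd_qq1:
  assumes "\<forall>j. k < j \<and> j \<le> d \<longrightarrow> v $ j = 0" "k + 1 \<le> d - k"
  shows "[:1, 1:] ^ (k + 1) dvd qq d v"
  unfolding qq_def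
proof (rule dvd_sum)
  fix j assume j: "j \<in> {..d}"
  show "[:1, 1:] ^ (k + 1) dvd Polynomial.smult (v $ j / ss d j) (ee d j)"
  proof (cases "j \<le> k")
    case True
    hence "k + 1 \<le> d - j" using assms(2) by simp
    hence "[:1, 1:] ^ (k + 1) dvd ([:1, 1:] ^ (d - j) :: complex poly)" by (rule le_imp_power_dvd)
    hence "[:1, 1:] ^ (k + 1) dvd ee d j" unfolding ee_def by (rule dvd_mult2)
    thus ?thesis by (rule dvd_smult)
  next
    case False
    thus ?thesis using assms(1) j by simp
  qed
qed

lemma dvd_qq2:
  assumes "\<forall>j. j \<le> k \<longrightarrow> v $ j = 0"
  shows "[:-1, 1:] ^ (k + 1) dvd qq d v"
  unfolding qq_def
proof (rule dvd_sum)
  fix j assume j: "j \<in> {..d}"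
  show "[:-1, 1:] ^ (k + 1) dvd Polynomial.smult (v $ j / ss d j) (ee d j)"
  proof (cases "j \<le> k")
    case False
    hence "k + 1 \<le> j" by simp
    hence "[:-1, 1:] ^ (k + 1) dvd ([:-1, 1:] ^ j :: complex poly)" by (rule le_imp_power_dvd)
    hence "[:-1, 1:] ^ (k + 1) dvd ee d j" unfolding ee_def by (rule dvd_mult)
    thus ?thesis by (rule dvd_smult)
  next
    case True
    thus ?thesis using assms(1) j by simp
  qed
qed

lemma tau00: "0 < d \<Longrightarrow> cmod (tau d $$ (0, 0)) < 1"
  and tautdd: "0 < d \<Longrightarrow> cmod (tau d $$ (d, d)) < 1"
proof -
  assume d: "0 < d"
  have "cmod (ph d) = 1 / 2 powr (real d / 2)"
    by (simp add: ph_def norm_divide norm_power)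
  also have "\<dots> < 1"
  proof -
    have "2 powr 0 < 2 powr (real d / 2)" using d by (intro powr_less_mono) auto
    thus ?thesis by simp
  qed
  finally have ph1: "cmod (ph d) < 1" .
  have "tau d $$ (0, 0) = ph d * coeff ([:1, 1:] ^ d) d"
    by (simp add: tau_def tau_entry_eq PP_def ee_def ss_nz)
  also have "\<dots> = ph d" using coeff_linear_power[of "1::complex" d] by simp
  finally show "cmod (tau d $$ (0, 0)) < 1" using ph1 by simp
  have "tau d $$ (d, d) = ph d * coeff ([:-1, 1:] ^ d) 0"
    by (simp add: tau_def tau_entry_eq PP_def ee_def ss_nz)
  also have "coeff ([:-1, 1:] ^ d) 0 = (-1 :: complex) ^ d"
    by (simp add: poly_0_coeff_0[symmetric] poly_power)
  finally show "cmod (tau d $$ (d, d)) < 1" using ph1 by (simp add: norm_mult norm_power)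
qed

theorem mainTheorem10:
  fixes k :: nat and v :: "complex vec"
  defines "d \<equiv> 2 * k + 1"
  shows "invertible_mat (tau d)
    \<and> cmod (tau d $$ (0, 0)) < 1 \<and> cmod (tau d $$ (d, d)) < 1
    \<and> (v \<in> carrier_vec (d + 1)
        \<and> ((\<forall>i < d + 1. k < i \<longrightarrow> v $ i = 0) \<or> (\<forall>i < d + 1. i \<le> k \<longrightarrow> v $ i = 0))
        \<and> ((\<forall>j < d + 1. odd j \<longrightarrow> (tau d *\<^sub>v v) $ j = 0)
           \<or> (\<forall>j < d + 1. even j \<longrightarrow> (tau d *\<^sub>v v) $ j = 0))
       \<longrightarrow> v = 0\<^sub>v (d + 1))"
proof (intro conjI impI)
  show "invertible_mat (tau d)" by (rule tau_invertible)
  show "cmod (tau d $$ (0, 0)) < 1" using tau00 d_def by simp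
  show "cmod (tau d $$ (d, d)) < 1" using tautdd d_def by simp
next
  assume H: "v \<in> carrier_vec (d + 1)
        \<and> ((\<forall>i < d + 1. k < i \<longrightarrow> v $ i = 0) \<or> (\<forall>i < d + 1. i \<le> k \<longrightarrow> v $ i = 0))
        \<and> ((\<forall>j < d + 1. odd j \<longrightarrow> (tau d *\<^sub>v v) $ j = 0)
           \<or> (\<forall>j < d + 1. even j \<longrightarrow> (tau d *\<^sub>v v) $ j = 0))"
  hence v: "v \<in> carrier_vec (d + 1)" by blast
  have dv: "[:1, 1:] ^ (k + 1) dvd qq d v \<or> [:-1, 1:] ^ (k + 1) dvd qq d v"
  proof -
    from H consider "\<forall>i < d + 1. k < i \<longrightarrow> v $ i = 0" | "\<forall>i < d + 1. i \<le> k \<longrightarrow> v $ i = 0" by blast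
    thus ?thesis
    proof cases
      case 1
      hence "[:1, 1:] ^ (k + 1) dvd qq d v" by (intro dvd_qq1) (auto simp: d_def)
      thus ?thesis ..
    next
      case 2
      hence "[:-1, 1:] ^ (k + 1) dvd qq d v" by (intro dvd_qq2) (auto simp: d_def)
      thus ?thesis ..
    qed
  qed
  have coef: "coeff (qq d v) m = 0" if m: "m \<le> d" and z: "(tau d *\<^sub>v v) $ (d - m) = 0" for m
  proof -
    have "ph d * ss d (d - m) * coeff (qq d v) (d - (d - m)) = 0"
      using Tv_entry[OF v, of "d - m"] z by simp
    thus ?thesis using m by (simp add: ph_nz ss_nz)
  qed
  have par: "(\<forall>m. even m \<longrightarrow> coeff (qq d v) m = 0) \<or> (\<forall>m. odd m \<longrightarrow> coeff (qq d v) m = 0)"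
  proof -
    from H consider "\<forall>j < d + 1. odd j \<longrightarrow> (tau d *\<^sub>v v) $ j = 0" | "\<forall>j < d + 1. even j \<longrightarrow> (tau d *\<^sub>v v) $ j = 0" by blast
    thus ?thesis
    proof cases
      case 1
      have "coeff (qq d v) m = 0" if "even m" for m
      proof (cases "m \<le> d")
        case True
        hence "odd (d - m)" using that by (simp add: d_def)
        thus ?thesis using coef[OF True] 1 by simp
      next
        case False
        thus ?thesis using degree_qq[of d v] by (intro coeff_eq_0) simp
      qed
      thus ?thesis by blast
    next
      case 2
      have "coeff (qq d v) m = 0" if "odd m" for m
      proof (cases "m \<le> d")
        case True
        hence "even (d - m)" using that by (simp add: d_def)
        thus ?thesis using coef[OF True] 2 by simp
      next
        case False
        thus ?thesis using degree_qq[of d v] by (intro coeff_eq_0) simp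
      qed
      thus ?thesis by blast
    qed
  qed
  have q0: "qq d v = 0"
    by (rule key_poly[OF _ par dv]) (use degree_qq[of d v] in \<open>simp add: d_def\<close>)
  have Tv0: "tau d *\<^sub>v v = 0\<^sub>v (d + 1)"
  proof (rule eq_vecI)
    fix i assume "i < dim_vec (0\<^sub>v (d + 1) :: complex vec)"
    hence "i \<le> d" by simp
    thus "(tau d *\<^sub>v v) $ i = 0\<^sub>v (d + 1) $ i" using Tv_entry[OF v] q0 by simp
  qed (simp add: dims)
  have "v = (Binv d * tau d) *\<^sub>v v" using v by (simp add: Binv_tau)
  also have "\<dots> = Binv d *\<^sub>v (tau d *\<^sub>v v)"
    by (rule assoc_mult_mat_vec[OF _ _ v]) (auto simp: Binv_def tau_def)
  also have "\<dots> = 0\<^sub>v (d + 1)" unfolding Tv0 by (auto simp: Binv_def)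
  finally show "v = 0\<^sub>v (d + 1)" .
qed

end
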